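(* Let $K=\mathrm{SU}(2)$ and $\mathcal{M}=\{(g_1,h_1,g_2,h_2)\in K^4:[g_1,h_1][g_2,h_2]=I\}/K$. The subset $$\{(g,h,khk^{-1},kgk^{-1})\in K^4 : [g,h]=-I,\ k^2=-I\}/K$$ of $\mathcal{M}$ is homeomorphic to $\mathbb{P}^2(\mathbb{R})$.
   Context: $[a,b]=aba^{-1}b^{-1}$; $K$ acts by simultaneous conjugation and $\mathcal{M}$ carries the quotient topology. *)

theory Defs
  imports "HOL-Analysis.Analysis"
begin

definition quotient_topology :: "'a topology \<Rightarrow> ('a \<Rightarrow> 'b) \<Rightarrow> 'b topology" where
  "quotient_topology X q =
     topology (\<lambda>U. U \<subseteq> q ` topspace X \<and> openin X {x \<in> topspace X. q x \<in> U})"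

lemma istopology_quotient:
  "istopology (\<lambda>U. U \<subseteq> q ` topspace X \<and> openin X {x \<in> topspace X. q x \<in> U})"
  unfolding istopology_def
proof (rule conjI; intro allI impI)
  fix S T assume st: "S \<subseteq> q ` topspace X \<and> openin X {x \<in> topspace X. q x \<in> S}"
    "T \<subseteq> q ` topspace X \<and> openin X {x \<in> topspace X. q x \<in> T}"
  have e: "{x \<in> topspace X. q x \<in> S \<inter> T} = {x \<in> topspace X. q x \<in> S} \<inter> {x \<in> topspace X. q x \<in> T}" by auto
  show "S \<inter> T \<subseteq> q ` topspace X \<and> openin X {x \<in> topspace X. q x \<in> S \<inter> T}"
    unfolding e using st by auto
next
  fix K assume K: "\<forall>S\<in>K. S \<subseteq> q ` topspace X \<and> openin X {x \<in> topspace X. q x \<in> S}"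
  have e: "{x \<in> topspace X. q x \<in> \<Union>K} = (\<Union>S\<in>K. {x \<in> topspace X. q x \<in> S})" by auto
  show "\<Union>K \<subseteq> q ` topspace X \<and> openin X {x \<in> topspace X. q x \<in> \<Union>K}"
    unfolding e using K by auto
qed

definition mat_adjoint :: "complex^2^2 \<Rightarrow> complex^2^2" where
  "mat_adjoint A = (\<chi> i j. cnj (A $ j $ i))"

definition SU2 :: "(complex^2^2) set" where
  "SU2 = {U. U ** mat_adjoint U = mat 1 \<and> mat_adjoint U ** U = mat 1 \<and> det U = 1}"

definition commutator :: "complex^2^2 \<Rightarrow> complex^2^2 \<Rightarrow> complex^2^2" where
  "commutator a b = a ** b ** matrix_inv a ** matrix_inv b"

type_synonym cmat = "complex^2^2"
type_synonym quad = "cmat \<times> cmat \<times> cmat \<times> cmat"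

definition conj_act :: "complex^2^2 \<Rightarrow> quad \<Rightarrow> quad" where
  "conj_act k = (\<lambda>(a, b, c, d).
     ((k ** a ** matrix_inv k, k ** b ** matrix_inv k,
      k ** c ** matrix_inv k, k ** d ** matrix_inv k) :: quad))"

definition orbit :: "quad \<Rightarrow> quad set" where
  "orbit x = {conj_act k x | k. k \<in> SU2}"

definition RepVar :: "quad set" where
  "RepVar = {(g1, h1, g2, h2). g1 \<in> SU2 \<and> h1 \<in> SU2 \<and> g2 \<in> SU2 \<and> h2 \<in> SU2 \<and>
              commutator g1 h1 ** commutator g2 h2 = mat 1}"

definition M_top :: "quad set topology" where
  "M_top = quotient_topology (subtopology euclidean RepVar) orbit"

definition S_sub :: "quad set set" where
  "S_sub = orbit ` {(g, h, k ** h ** matrix_inv k, k ** g ** matrix_inv k) | g h k.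
              g \<in> SU2 \<and> h \<in> SU2 \<and> k \<in> SU2 \<and> commutator g h = - mat 1 \<and> k ** k = - mat 1}"

definition RP2 :: "(real^3) set topology" where
  "RP2 = quotient_topology (subtopology euclidean (sphere 0 1)) (\<lambda>x. {x, - x})"

end

theory Submission
  imports Defs
begin


definition mk :: "complex \<Rightarrow> complex \<Rightarrow> cmat" where
  "mk a b = (\<chi> i j. if i = 1 then (if j = 1 then a else b) else (if j = 1 then - cnj b else cnj a))"

lemma two_ne: "(2::2) \<noteq> 1" by simp

lemma mk_nth[simp]: "mk a b $ 1 $ 1 = a" "mk a b $ 1 $ 2 = b" "mk a b $ 2 $ 1 = - cnj b" "mk a b $ 2 $ 2 = cnj a"
  by (simp_all add: mk_def)

lemma cmat_eq_iff: "(A::cmat) = B \<longleftrightarrow> A$1$1 = B$1$1 \<and> A$1$2 = B$1$2 \<and> A$2$1 = B$2$1 \<and> A$2$2 = B$2$2"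
  by (auto simp: vec_eq_iff forall_2)

lemma mk_eq_iff[simp]: "mk a b = mk c d \<longleftrightarrow> a = c \<and> b = d"
  by (auto simp: cmat_eq_iff)

lemma mk_mult: "mk a b ** mk c d = mk (a*c - b * cnj d) (a*d + b * cnj c)"
  by (simp add: cmat_eq_iff matrix_matrix_mult_def sum_2 algebra_simps)

lemma mk_one: "mat 1 = mk 1 0"
  by (simp add: cmat_eq_iff mat_def)

lemma mk_neg: "- mk a b = mk (-a) (-b)"
  by (simp add: cmat_eq_iff)

lemma mk_adj: "mat_adjoint (mk a b) = mk (cnj a) (-b)"
  by (simp add: cmat_eq_iff mat_adjoint_def)

lemma mk_det: "det (mk a b) = a * cnj a + b * cnj b"
  by (simp add: det_2)

lemma mk_trace: "trace (mk a b) = a + cnj a"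
  by (simp add: trace_def sum_2)



lemmas mmE = cmat_eq_iff matrix_matrix_mult_def sum_2 mat_def mat_adjoint_def

lemma mm_sub_l: "((A::cmat) - B) ** (C::cmat) = A ** C - B ** C" by (subst cmat_eq_iff) (simp add: matrix_matrix_mult_def sum_2 algebra_simps)
lemma mm_sub_r: "(C::cmat) ** ((A::cmat) - B) = C ** A - C ** B" by (subst cmat_eq_iff) (simp add: matrix_matrix_mult_def sum_2 algebra_simps)
lemma mm_add_l: "((A::cmat) + B) ** (C::cmat) = A ** C + B ** C" by (subst cmat_eq_iff) (simp add: matrix_matrix_mult_def sum_2 algebra_simps)
lemma mm_add_r: "(C::cmat) ** ((A::cmat) + B) = C ** A + C ** B" by (subst cmat_eq_iff) (simp add: matrix_matrix_mult_def sum_2 algebra_simps)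
lemma mm_neg_l: "(- (A::cmat)) ** (C::cmat) = - (A ** C)" by (subst cmat_eq_iff) (simp add: matrix_matrix_mult_def sum_2 algebra_simps)
lemma mm_neg_r: "(C::cmat) ** (- (A::cmat)) = - (C ** A)" by (subst cmat_eq_iff) (simp add: matrix_matrix_mult_def sum_2 algebra_simps)
lemma adj_mult: "mat_adjoint (A ** B) = mat_adjoint B ** mat_adjoint A"
  by (simp add: mmE algebra_simps mult.commute)
lemma adj_adj[simp]: "mat_adjoint (mat_adjoint A) = A" by (simp add: mmE)
lemma adj_one[simp]: "mat_adjoint (mat 1) = mat 1" by (simp add: mmE)
lemma adj_neg: "mat_adjoint (- A) = - mat_adjoint A" by (simp add: mmE)
lemma trace_neg: "trace (- (A::cmat)) = - trace A" by (simp add: trace_def sum_2)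
lemma mk_sub: "mk a b - mk c d = mk (a - c) (b - d)" by (simp add: cmat_eq_iff)

lemma SU2_mk_iff: "mk a b \<in> SU2 \<longleftrightarrow> a * cnj a + b * cnj b = 1"
  by (auto simp: SU2_def mk_adj mk_mult mk_one mk_det algebra_simps)

lemma SU2_mk: assumes "U \<in> SU2" shows "U = mk (U$1$1) (U$1$2)"
proof -
  define V :: cmat where "V = (\<chi> i j. if i = 1 then (if j = 1 then U$2$2 else - U$1$2) else (if j = 1 then - U$2$1 else U$1$1))"
  have V: "V$1$1 = U$2$2" "V$1$2 = - U$1$2" "V$2$1 = - U$2$1" "V$2$2 = U$1$1" by (simp_all add: V_def)
  have d: "U$1$1 * U$2$2 - U$1$2 * U$2$1 = 1" using assms by (simp add: SU2_def det_2)
  have UV: "U ** V = mat 1" using d by (simp add: mmE V algebra_simps)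
  have "mat_adjoint U = mat_adjoint U ** (U ** V)" using UV by simp
  also have "\<dots> = V" using assms by (simp add: matrix_mul_assoc SU2_def)
  finally have "mat_adjoint U = V" .
  then have "mat_adjoint U $1$1 = V$1$1" "mat_adjoint U $1$2 = V$1$2" by simp_all
  then have e: "cnj (U$1$1) = U$2$2" "cnj (U$2$1) = - U$1$2" by (simp_all add: mat_adjoint_def V)
  then have "U$2$1 = - cnj (U$1$2)" by (metis complex_cnj_cnj complex_cnj_minus)
  with e show ?thesis by (simp add: cmat_eq_iff)
qed

lemma SU2_ex: "U \<in> SU2 \<Longrightarrow> \<exists>a b. U = mk a b \<and> a * cnj a + b * cnj b = 1"
  by (metis SU2_mk SU2_mk_iff)

lemma SU2_radj: "U \<in> SU2 \<Longrightarrow> U ** mat_adjoint U = mat 1" by (simp add: SU2_def)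
lemma SU2_ladj: "U \<in> SU2 \<Longrightarrow> mat_adjoint U ** U = mat 1" by (simp add: SU2_def)

lemma SU2_inv: assumes "U \<in> SU2" shows "matrix_inv U = mat_adjoint U"
proof -
  have ex: "\<exists>A'. U ** A' = mat 1 \<and> A' ** U = mat 1" using assms SU2_def by blast
  have "U ** matrix_inv U = mat 1 \<and> matrix_inv U ** U = mat 1"
    unfolding matrix_inv_def by (rule someI_ex[OF ex])
  then have "matrix_inv U = (mat_adjoint U ** U) ** matrix_inv U" using assms by (simp add: SU2_ladj)
  also have "\<dots> = mat_adjoint U" by (metis \<open>U ** matrix_inv U = mat 1 \<and> _\<close> matrix_mul_assoc matrix_mul_rid)
  finally show ?thesis .
qed

lemma SU2_one: "mat 1 \<in> SU2" by (simp add: mk_one SU2_mk_iff)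

lemma SU2_mult: assumes "U \<in> SU2" "V \<in> SU2" shows "U ** V \<in> SU2"
proof -
  have "U ** V ** mat_adjoint (U ** V) = U ** (V ** mat_adjoint V) ** mat_adjoint U"
    by (simp only: adj_mult matrix_mul_assoc)
  also have "\<dots> = mat 1" using assms by (simp add: SU2_radj)
  finally have 1: "U ** V ** mat_adjoint (U ** V) = mat 1" .
  have "mat_adjoint (U ** V) ** (U ** V) = mat_adjoint V ** (mat_adjoint U ** U) ** V"
    by (simp only: adj_mult matrix_mul_assoc)
  also have "\<dots> = mat 1" using assms by (simp add: SU2_ladj)
  finally have 2: "mat_adjoint (U ** V) ** (U ** V) = mat 1" .
  have "det U = 1" "det V = 1" using assms by (auto simp: SU2_def)
  then have "det (U ** V) = 1" by (simp add: det_mul)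
  with 1 2 show ?thesis by (simp add: SU2_def)
qed

lemma SU2_adj: assumes "U \<in> SU2" shows "mat_adjoint U \<in> SU2"
  using SU2_ex[OF assms] by (auto simp: mk_adj SU2_mk_iff algebra_simps)

lemma SU2_neg: assumes "U \<in> SU2" shows "- U \<in> SU2"
  using SU2_ex[OF assms] by (auto simp: mk_neg SU2_mk_iff algebra_simps)

definition cj :: "cmat \<Rightarrow> cmat \<Rightarrow> cmat" where "cj k A = k ** A ** mat_adjoint k"

lemma cj_mult: "k \<in> SU2 \<Longrightarrow> cj k (A ** B) = cj k A ** cj k B"
  by (simp add: cj_def matrix_mul_assoc) (metis SU2_ladj matrix_mul_assoc matrix_mul_rid)
lemma cj_comp: "cj (k ** l) A = cj k (cj l A)" by (simp add: cj_def adj_mult matrix_mul_assoc)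
lemma cj_one: "k \<in> SU2 \<Longrightarrow> cj k (mat 1) = mat 1" by (simp add: cj_def SU2_radj)
lemma cj_neg: "cj k (- A) = - cj k A" by (simp add: cj_def mm_neg_l mm_neg_r)
lemma cj_negk: "cj (- k) A = cj k A" by (simp add: cj_def mm_neg_l mm_neg_r adj_neg)
lemma cj_trace: "k \<in> SU2 \<Longrightarrow> trace (cj k A) = trace A"
  by (simp add: cj_def trace_mul_sym[of "k ** A"] matrix_mul_assoc SU2_ladj)
lemma cj_adj: "mat_adjoint (cj k A) = cj k (mat_adjoint A)" by (simp add: cj_def adj_mult matrix_mul_assoc)
lemma cj_SU2: "k \<in> SU2 \<Longrightarrow> A \<in> SU2 \<Longrightarrow> cj k A \<in> SU2" by (simp add: cj_def SU2_mult SU2_adj)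
lemma cj_cj: assumes "u \<in> SU2" shows "cj u (cj k A) = cj (cj u k) (cj u A)"
proof -
  have "cj u (cj k A) = cj u k ** cj u A ** cj u (mat_adjoint k)" by (simp add: cj_def[of k] cj_mult assms)
  also have "cj u (mat_adjoint k) = mat_adjoint (cj u k)" by (simp add: cj_adj)
  finally show ?thesis by (simp add: cj_def[of "cj u k"])
qed
lemma cj_inv: assumes "u \<in> SU2" shows "cj (mat_adjoint u) (cj u A) = A"
  using assms unfolding cj_def by (metis SU2_ladj matrix_mul_assoc matrix_mul_lid matrix_mul_rid adj_adj)

lemma conj_act_SU2: "k \<in> SU2 \<Longrightarrow> conj_act k (a, b, c, d) = (cj k a, cj k b, cj k c, cj k d)"
  by (simp add: conj_act_def SU2_inv cj_def)

lemma conj_act_comp: "k \<in> SU2 \<Longrightarrow> l \<in> SU2 \<Longrightarrow> conj_act k (conj_act l z) = conj_act (k ** l) z"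
  by (cases z) (simp add: conj_act_SU2 SU2_mult cj_comp)

lemma conj_act_one: "conj_act (mat 1) z = z"
  by (cases z) (simp add: conj_act_SU2 SU2_one cj_def)

lemma orbit_self: "z \<in> orbit z"
  unfolding orbit_def using SU2_one conj_act_one by (metis (mono_tags, lifting) mem_Collect_eq)

lemma orbit_conj: assumes "u \<in> SU2" shows "orbit (conj_act u z) = orbit z"
proof
  show "orbit (conj_act u z) \<subseteq> orbit z"
    unfolding orbit_def using assms conj_act_comp SU2_mult by blast
  show "orbit z \<subseteq> orbit (conj_act u z)"
  proof
    fix w assume "w \<in> orbit z"
    then obtain k where k: "k \<in> SU2" "w = conj_act k z" unfolding orbit_def by blast
    have e: "(k ** mat_adjoint u) ** u = k" using assms by (metis SU2_ladj matrix_mul_assoc matrix_mul_rid)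
    have ku: "k ** mat_adjoint u \<in> SU2" using k(1) assms by (simp add: SU2_mult SU2_adj)
    have "conj_act (k ** mat_adjoint u) (conj_act u z) = conj_act k z"
      using conj_act_comp[OF ku assms, of z] e by simp
    then have "w = conj_act (k ** mat_adjoint u) (conj_act u z)" using k by simp
    then show "w \<in> orbit (conj_act u z)" unfolding orbit_def using ku by blast
  qed
qed

lemma orbit_mem: "w \<in> orbit z \<Longrightarrow> \<exists>u\<in>SU2. w = conj_act u z" unfolding orbit_def by blast



lemma neg1_mult: "(- mat 1) ** (A::cmat) = - A" by (simp add: mm_neg_l)

lemma comm_anti: assumes g: "g \<in> SU2" and h: "h \<in> SU2" and c: "commutator g h = - mat 1"
  shows "g ** h = - (h ** g)"
proof -
  have c': "g ** h ** mat_adjoint g ** mat_adjoint h = - mat 1"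
    using c g h by (simp add: commutator_def SU2_inv)
  have "g ** h = g ** h ** (mat_adjoint g ** (mat_adjoint h ** h) ** g)"
    using g h by (simp add: SU2_ladj)
  also have "\<dots> = (g ** h ** mat_adjoint g ** mat_adjoint h) ** (h ** g)"
    by (simp only: matrix_mul_assoc)
  also have "\<dots> = - (h ** g)" by (simp add: c' neg1_mult)
  finally show ?thesis .
qed

lemma anti_trace: assumes h: "h \<in> SU2" and a: "g ** h = - (h ** g)" shows "trace g = 0"
proof -
  have "g = g ** h ** mat_adjoint h" using h by (simp add: SU2_radj matrix_mul_assoc[symmetric])
  also have "\<dots> = - (h ** g ** mat_adjoint h)" by (simp add: a mm_neg_l)
  finally have "trace g = - trace (cj h g)" by (metis cj_def trace_neg)
  then have "trace g = - trace g" using h by (simp add: cj_trace)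
  then show ?thesis by simp
qed

lemma trace0_mk: "trace (mk a b) = 0 \<longleftrightarrow> cnj a = - a"
  by (auto simp: mk_trace add_eq_0_iff)

lemma sq_neg: assumes "U \<in> SU2" "trace U = 0" shows "U ** U = - mat 1"
proof -
  obtain a b where U: "U = mk a b" "a * cnj a + b * cnj b = 1" using SU2_ex[OF assms(1)] by blast
  have ca: "cnj a = - a" using assms(2) U by (simp add: trace0_mk)
  have "a * a - b * cnj b = -1" using U(2) ca by (simp add: algebra_simps)
  then show ?thesis using U ca by (simp add: mk_mult mk_one mk_neg algebra_simps)
qed

lemma sq_trace: assumes "U \<in> SU2" "U ** U = - mat 1" shows "trace U = 0"
proof -
  obtain a b where U: "U = mk a b" "a * cnj a + b * cnj b = 1" using SU2_ex[OF assms(1)] by blast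
  have e: "a * a - b * cnj b = -1" "a * b + b * cnj a = 0" using assms(2) U by (simp_all add: mk_mult mk_one mk_neg)
  have 1: "a * (a + cnj a) = 0" using e(1) U(2) by algebra
  have 2: "b * (a + cnj a) = 0" using e(2) by algebra
  show ?thesis
  proof (rule ccontr)
    assume "trace U \<noteq> 0"
    then have "a + cnj a \<noteq> 0" using U by (simp add: mk_trace)
    then have "a = 0" "b = 0" using 1 2 by auto
    then show False using U(2) by simp
  qed
qed



lemma scal_comm: "mk (of_real c) 0 ** (X::cmat) = X ** mk (of_real c) 0"
  by (subst cmat_eq_iff) (simp add: mk_def matrix_matrix_mult_def sum_2)

lemma rot:
  assumes p: "p \<in> SU2" "trace p = 0" and q: "q \<in> SU2" "trace q = 0" and pq: "p \<noteq> - q"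
  shows "\<exists>u\<in>SU2. cj u p = q \<and> (\<forall>r. r ** p = - (p ** r) \<longrightarrow> r ** q = - (q ** r) \<longrightarrow> cj u r = r)"
proof -
  have pp: "p ** p = - mat 1" using sq_neg p by blast
  have qq: "q ** q = - mat 1" using sq_neg q by blast
  define w where "w = mat 1 - q ** p"
  have "w ** p = p - q ** (p ** p)" by (simp add: w_def mm_sub_l matrix_mul_assoc)
  also have "\<dots> = p + q" by (simp add: pp mm_neg_r)
  also have "\<dots> = q - (q ** q) ** p" by (simp add: qq mm_neg_l)
  also have "\<dots> = q ** w" by (simp add: w_def mm_sub_r matrix_mul_assoc)
  finally have wp: "w ** p = q ** w" .
  have wr: "r ** w = w ** r" if r1: "r ** p = - (p ** r)" and r2: "r ** q = - (q ** r)" for r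
  proof -
    have "r ** w = r - (r ** q) ** p" by (simp add: w_def mm_sub_r matrix_mul_assoc)
    also have "\<dots> = r + q ** (r ** p)" by (simp add: r2 mm_neg_l matrix_mul_assoc)
    also have "\<dots> = r - q ** p ** r" by (simp add: r1 mm_neg_r matrix_mul_assoc)
    also have "\<dots> = w ** r" by (simp add: w_def mm_sub_l)
    finally show ?thesis .
  qed
  obtain p1 p2 where P: "p = mk p1 p2" using SU2_ex p by blast
  obtain q1 q2 where Q: "q = mk q1 q2" using SU2_ex q by blast
  define \<alpha> where "\<alpha> = 1 - (q1 * p1 - q2 * cnj p2)"
  define \<beta> where "\<beta> = - (q1 * p2 + q2 * cnj p1)"
  have W: "w = mk \<alpha> \<beta>" by (simp add: w_def P Q mk_mult mk_one mk_sub \<alpha>_def \<beta>_def)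
  have nz: "\<not> (\<alpha> = 0 \<and> \<beta> = 0)"
  proof
    assume "\<alpha> = 0 \<and> \<beta> = 0"
    then have "w = mat 0" by (simp add: W cmat_eq_iff mat_def)
    then have qp: "q ** p = mat 1" by (simp add: w_def)
    have "p = - ((q ** q) ** p)" by (simp add: qq mm_neg_l)
    also have "\<dots> = - q" by (simp add: qp matrix_mul_assoc[symmetric])
    finally show False using pq by simp
  qed
  define n where "n = (cmod \<alpha>)^2 + (cmod \<beta>)^2"
  have npos: "n > 0" using nz by (auto simp: n_def add_pos_nonneg add_nonneg_pos)
  define c where "c = 1 / sqrt n"
  have c2: "c * c * n = 1" using npos by (simp add: c_def)
  define s where "s = mk (of_real c) 0"
  define u where "u = s ** w"
  have U: "u = mk (of_real c * \<alpha>) (of_real c * \<beta>)" by (simp add: u_def s_def W mk_mult)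
  have "of_real c * \<alpha> * cnj (of_real c * \<alpha>) + of_real c * \<beta> * cnj (of_real c * \<beta>)
        = of_real (c * c) * (\<alpha> * cnj \<alpha> + \<beta> * cnj \<beta>)" by (simp add: algebra_simps)
  also have "\<dots> = of_real (c * c * n)" by (simp add: n_def complex_norm_square[symmetric] algebra_simps)
  also have "\<dots> = 1" using c2 by simp
  finally have uS: "u \<in> SU2" by (simp add: U SU2_mk_iff)
  have up: "u ** p = q ** u"
  proof -
    have "u ** p = s ** (q ** w)" by (simp add: u_def wp[symmetric] matrix_mul_assoc)
    also have "\<dots> = (s ** q) ** w" by (simp add: matrix_mul_assoc)
    also have "\<dots> = (q ** s) ** w" by (simp add: s_def scal_comm)
    also have "\<dots> = q ** u" by (simp add: u_def matrix_mul_assoc)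
    finally show ?thesis .
  qed
  have "cj u p = q" using up uS by (simp add: cj_def SU2_radj matrix_mul_assoc[symmetric])
  moreover have "cj u r = r" if "r ** p = - (p ** r)" "r ** q = - (q ** r)" for r
  proof -
    have "u ** r = s ** (r ** w)" by (simp add: u_def wr[OF that] matrix_mul_assoc)
    also have "\<dots> = (s ** r) ** w" by (simp add: matrix_mul_assoc)
    also have "\<dots> = (r ** s) ** w" by (simp add: s_def scal_comm)
    also have "\<dots> = r ** u" by (simp add: u_def matrix_mul_assoc)
    finally show ?thesis using uS by (simp add: cj_def SU2_radj matrix_mul_assoc[symmetric])
  qed
  ultimately show ?thesis using uS by blast
qed



definition "I0 = mk \<i> 0"
definition "J0 = mk 0 1"
definition Kx :: "real^3 \<Rightarrow> cmat" where "Kx x = mk (Complex 0 (x$1)) (Complex (x$2) (x$3))"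

lemma I0_SU2: "I0 \<in> SU2" by (simp add: I0_def SU2_mk_iff)
lemma J0_SU2: "J0 \<in> SU2" by (simp add: J0_def SU2_mk_iff)
lemma I0_tr: "trace I0 = 0" by (simp add: I0_def mk_trace)
lemma J0_tr: "trace J0 = 0" by (simp add: J0_def mk_trace)
lemma IJ_anti: "I0 ** J0 = - (J0 ** I0)" by (simp add: I0_def J0_def mk_mult mk_neg)
lemma cjJI: "cj J0 (- I0) = I0" by (simp add: cj_def I0_def J0_def mk_mult mk_neg mk_adj)
lemma cjIJ: "cj I0 (- J0) = J0" by (simp add: cj_def I0_def J0_def mk_mult mk_neg mk_adj)
lemma cjII: "cj I0 I0 = I0" by (simp add: cj_def I0_def mk_mult mk_adj)

lemma nf: assumes g: "g \<in> SU2" and h: "h \<in> SU2" and c: "commutator g h = - mat 1"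
  shows "\<exists>u\<in>SU2. cj u g = I0 \<and> cj u h = J0"
proof -
  have gh: "g ** h = - (h ** g)" using comm_anti[OF g h c] .
  then have hg: "h ** g = - (g ** h)" by (simp add: minus_equation_iff)
  have tg: "trace g = 0" using anti_trace[OF h gh] .
  have th: "trace h = 0" using anti_trace[OF g hg] .
  obtain u1 where u1: "u1 \<in> SU2" "cj u1 g = I0"
  proof (cases "g = - I0")
    case True then show ?thesis using that J0_SU2 cjJI by blast
  next
    case False then show ?thesis using that rot[OF g tg I0_SU2 I0_tr] by blast
  qed
  define h1 where "h1 = cj u1 h"
  have h1S: "h1 \<in> SU2" using h1_def cj_SU2 u1 h by blast
  have th1: "trace h1 = 0" using h1_def cj_trace u1 th by simp
  have "I0 ** h1 = cj u1 (g ** h)" using u1 by (simp add: h1_def cj_mult)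
  also have "\<dots> = cj u1 (- (h ** g))" by (simp add: gh)
  also have "\<dots> = - (h1 ** I0)" using u1 by (simp add: cj_neg cj_mult h1_def)
  finally have ah1: "I0 ** h1 = - (h1 ** I0)" .
  obtain u2 where u2: "u2 \<in> SU2" "cj u2 h1 = J0" "cj u2 I0 = I0"
  proof (cases "h1 = - J0")
    case True then show ?thesis using that I0_SU2 cjIJ cjII by blast
  next
    case False then show ?thesis using that rot[OF h1S th1 J0_SU2 J0_tr] ah1 IJ_anti by blast
  qed
  have "u2 ** u1 \<in> SU2" using u1 u2 SU2_mult by blast
  moreover have "cj (u2 ** u1) g = I0" "cj (u2 ** u1) h = J0"
    using u1 u2 by (simp_all add: cj_comp h1_def[symmetric])
  ultimately show ?thesis by blast
qed

lemma sph: "(x::real^3) \<in> sphere 0 1 \<longleftrightarrow> x$1^2 + x$2^2 + x$3^2 = 1"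
  by (simp add: norm_eq_1 inner_vec_def sum_3 power2_eq_square)

lemma Kx_SU2: assumes "x \<in> sphere 0 1" shows "Kx x \<in> SU2"
proof -
  have "x$1^2+x$2^2+x$3^2 = 1" using assms sph by blast
  then show ?thesis by (simp add: Kx_def SU2_mk_iff complex_eq_iff power2_eq_square)
qed

lemma Kx_tr: "trace (Kx x) = 0" by (simp add: Kx_def mk_trace complex_eq_iff)

lemma Kx_sq: "x \<in> sphere 0 1 \<Longrightarrow> Kx x ** Kx x = - mat 1"
  using sq_neg Kx_SU2 Kx_tr by blast

lemma Kx_neg: "Kx (- x) = - Kx x" by (simp add: Kx_def mk_neg complex_eq_iff)

lemma comm_IJ: "commutator I0 J0 = - mat 1"
  by (simp add: commutator_def SU2_inv I0_SU2 J0_SU2) (simp add: I0_def J0_def mk_mult mk_adj mk_neg mk_one)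

definition Q :: "real^3 \<Rightarrow> quad" where
  "Q x = (I0, J0, Kx x ** J0 ** matrix_inv (Kx x), Kx x ** I0 ** matrix_inv (Kx x))"

definition P :: "real^3 \<Rightarrow> quad set" where "P x = orbit (Q x)"

lemma Q_cj: "x \<in> sphere 0 1 \<Longrightarrow> Q x = (I0, J0, cj (Kx x) J0, cj (Kx x) I0)"
  by (simp add: Q_def cj_def SU2_inv Kx_SU2)

lemma Q_neg: "x \<in> sphere 0 1 \<Longrightarrow> Q (- x) = Q x"
proof -
  assume x: "x \<in> sphere 0 1"
  then have "- x \<in> sphere 0 1" by simp
  then show ?thesis using x by (simp add: Q_cj Kx_neg cj_negk)
qed

lemma S_sub_eq: "S_sub = P ` sphere 0 1"
proof
  show "P ` sphere 0 1 \<subseteq> S_sub"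
  proof
    fix Ob assume "Ob \<in> P ` sphere 0 1"
    then obtain x where x: "x \<in> sphere 0 1" "Ob = P x" by blast
    have "Q x \<in> {(g, h, k ** h ** matrix_inv k, k ** g ** matrix_inv k) | g h k.
              g \<in> SU2 \<and> h \<in> SU2 \<and> k \<in> SU2 \<and> commutator g h = - mat 1 \<and> k ** k = - mat 1}"
      unfolding Q_def using I0_SU2 J0_SU2 Kx_SU2[OF x(1)] comm_IJ Kx_sq[OF x(1)] by blast
    then show "Ob \<in> S_sub" unfolding S_sub_def x(2) P_def by blast
  qed
  show "S_sub \<subseteq> P ` sphere 0 1"
  proof
    fix Ob assume "Ob \<in> S_sub"
    then obtain g h k where gh: "g \<in> SU2" "h \<in> SU2" "k \<in> SU2" "commutator g h = - mat 1" "k ** k = - mat 1"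
      and Ob: "Ob = orbit (g, h, k ** h ** matrix_inv k, k ** g ** matrix_inv k)"
      unfolding S_sub_def by blast
    have Ob': "Ob = orbit (g, h, cj k h, cj k g)" using Ob gh by (simp add: cj_def SU2_inv)
    obtain u where u: "u \<in> SU2" "cj u g = I0" "cj u h = J0" using nf gh by blast
    define k' where "k' = cj u k"
    have k'S: "k' \<in> SU2" using k'_def cj_SU2 u gh by blast
    have "k' ** k' = - mat 1" using u gh by (simp add: k'_def cj_mult[symmetric] cj_neg cj_one)
    then have tk: "trace k' = 0" using sq_trace k'S by blast
    obtain a b where ab: "k' = mk a b" "a * cnj a + b * cnj b = 1" using SU2_ex[OF k'S] by blast
    have ca: "cnj a = - a" using tk ab by (simp add: trace0_mk)
    then have Ra: "Re a = 0" by (simp add: complex_eq_iff)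
    define x :: "real^3" where "x = vector [Im a, Re b, Im b]"
    have Kk: "Kx x = k'" using Ra by (simp add: Kx_def x_def ab complex_eq_iff)
    have "complex_of_real (((Re a)^2 + (Im a)^2) + ((Re b)^2 + (Im b)^2)) = 1"
      using ab(2) by (simp only: complex_mult_cnj of_real_add)
    then have "((Re a)^2 + (Im a)^2) + ((Re b)^2 + (Im b)^2) = 1" using of_real_eq_1_iff by blast
    then have "(Im a)^2 + (Re b)^2 + (Im b)^2 = 1" using Ra by simp
    then have xs: "x \<in> sphere 0 1" unfolding sph x_def by simp
    have e1: "cj u (cj k h) = cj k' J0" by (subst cj_cj[OF u(1)]) (simp add: k'_def u)
    have e2: "cj u (cj k g) = cj k' I0" by (subst cj_cj[OF u(1)]) (simp add: k'_def u)
    have "conj_act u (g, h, cj k h, cj k g) = (cj u g, cj u h, cj u (cj k h), cj u (cj k g))"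
      by (rule conj_act_SU2[OF u(1)])
    also have "\<dots> = (I0, J0, cj k' J0, cj k' I0)" by (simp only: u(2) u(3) e1 e2)
    also have "\<dots> = Q x" by (simp only: Q_cj[OF xs] Kk)
    finally have "conj_act u (g, h, cj k h, cj k g) = Q x" .
    moreover have "Ob = orbit (conj_act u (g, h, cj k h, cj k g))" using Ob' orbit_conj[OF u(1)] by simp
    ultimately have "Ob = P x" by (simp add: P_def)
    then show "Ob \<in> P ` sphere 0 1" using xs by blast
  qed
qed



definition T :: "quad \<Rightarrow> real \<times> real \<times> real \<times> real \<times> real" where
 "T z = (case z of (a,b,c,d) \<Rightarrow> (Re (trace (a ** d)), Re (trace (b ** c)), Re (trace (a ** c)),
     Re (trace (a ** d ** c)), Re (trace (b ** d ** c))))"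

lemma T_inv: assumes "u \<in> SU2" shows "T (conj_act u z) = T z"
proof -
  obtain a b c d where z: "z = (a, b, c, d)" by (cases z) auto
  show ?thesis using assms by (simp add: z T_def conj_act_SU2 cj_mult[symmetric] cj_trace)
qed

lemma T_Q: assumes x: "x \<in> sphere 0 1"
  shows "T (Q x) = (2 - 4 * x$1 * x$1, 2 - 4 * x$2 * x$2, - 4 * x$1 * x$2, - 4 * x$1 * x$3, - 4 * x$2 * x$3)"
proof -
  have s: "x$1 * x$1 = 1 - x$2 * x$2 - x$3 * x$3" using x sph[of x] by (simp add: power2_eq_square)
  show ?thesis
    apply (simp add: Q_cj[OF x] T_def Kx_def I0_def J0_def cj_def mk_mult mk_adj mk_trace)
    apply (intro conjI)
    using s by algebra+
qed

lemma sq_cases: "(a::real) * a = b * b \<Longrightarrow> b = a \<or> b = - a"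
  by (metis minus_mult_minus square_eq_iff)

lemma real_sign:
  fixes a1 a2 a3 b1 b2 b3 :: real
  assumes sa: "a1*a1 + a2*a2 + a3*a3 = 1" and sb: "b1*b1 + b2*b2 + b3*b3 = 1"
    and e1: "a1*a1 = b1*b1" and e2: "a2*a2 = b2*b2" and e12: "a1*a2 = b1*b2"
    and e13: "a1*a3 = b1*b3" and e23: "a2*a3 = b2*b3"
  shows "(b1 = a1 \<and> b2 = a2 \<and> b3 = a3) \<or> (b1 = - a1 \<and> b2 = - a2 \<and> b3 = - a3)"
proof -
  have e3: "a3*a3 = b3*b3" using sa sb e1 e2 by linarith
  show ?thesis
  proof (cases "a1 = 0")
    case False
    from sq_cases[OF e1] show ?thesis
    proof
      assume b: "b1 = a1"
      then have "b2 = a2" "b3 = a3" using e12 e13 False by auto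
      then show ?thesis using b by auto
    next
      assume b: "b1 = - a1"
      then have "b2 = - a2" "b3 = - a3" using e12 e13 False
        by (metis minus_mult_minus mult_cancel_left)+
      then show ?thesis using b by auto
    qed
  next
    case a1: True
    then have b1: "b1 = 0" using e1 by simp
    show ?thesis
    proof (cases "a2 = 0")
      case False
      from sq_cases[OF e2] show ?thesis
      proof
        assume b: "b2 = a2"
        then have "b3 = a3" using e23 False by auto
        then show ?thesis using b a1 b1 by auto
      next
        assume b: "b2 = - a2"
        then have "b3 = - a3" using e23 False by (metis minus_mult_minus mult_cancel_left)
        then show ?thesis using b a1 b1 by auto
      qed
    next
      case a2: True
      then have b2: "b2 = 0" using e2 by simp
      from sq_cases[OF e3] show ?thesis using a1 a2 b1 b2 by auto
    qed
  qed
qed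

lemma T_inj: assumes x: "x \<in> sphere 0 1" and y: "y \<in> sphere 0 1" and e: "T (Q x) = T (Q y)"
  shows "y = x \<or> y = - x"
proof -
  have sx: "x$1*x$1 + x$2*x$2 + x$3*x$3 = 1" using x sph[of x] by (simp add: power2_eq_square)
  have sy: "y$1*y$1 + y$2*y$2 + y$3*y$3 = 1" using y sph[of y] by (simp add: power2_eq_square)
  from e have "x$1*x$1 = y$1*y$1" "x$2*x$2 = y$2*y$2" "x$1*x$2 = y$1*y$2" "x$1*x$3 = y$1*y$3" "x$2*x$3 = y$2*y$3"
    by (simp_all add: T_Q[OF x] T_Q[OF y])
  from real_sign[OF sx sy this] show ?thesis
    by (auto simp: vec_eq_iff forall_3)
qed

lemma repvar: assumes g: "g \<in> SU2" and h: "h \<in> SU2" and k: "k \<in> SU2" and c: "commutator g h = - mat 1"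
  shows "(g, h, cj k h, cj k g) \<in> RepVar"
proof -
  have c': "g ** h ** mat_adjoint g ** mat_adjoint h = - mat 1"
    using c g h by (simp add: commutator_def SU2_inv)
  have "h ** g ** mat_adjoint h ** mat_adjoint g = mat_adjoint (g ** h ** mat_adjoint g ** mat_adjoint h)"
    by (simp add: adj_mult matrix_mul_assoc)
  also have "\<dots> = - mat 1" by (simp add: c' adj_neg)
  finally have hg: "h ** g ** mat_adjoint h ** mat_adjoint g = - mat 1" .
  have "commutator (cj k h) (cj k g) = cj k h ** cj k g ** mat_adjoint (cj k h) ** mat_adjoint (cj k g)"
    using k g h by (simp add: commutator_def SU2_inv cj_SU2)
  also have "\<dots> = cj k (h ** g ** mat_adjoint h ** mat_adjoint g)"
    using k by (simp add: cj_adj cj_mult)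
  also have "\<dots> = - mat 1" using k by (simp add: hg cj_neg cj_one)
  finally have "commutator (cj k h) (cj k g) = - mat 1" .
  then have "commutator g h ** commutator (cj k h) (cj k g) = mat 1"
    by (simp add: c mm_neg_l mm_neg_r)
  then show ?thesis unfolding RepVar_def using g h k cj_SU2 by blast
qed

lemma Q_RepVar: "x \<in> sphere 0 1 \<Longrightarrow> Q x \<in> RepVar"
  using repvar[OF I0_SU2 J0_SU2 Kx_SU2 comm_IJ] Q_cj by simp



lemma openin_quot:
  "openin (quotient_topology X q) U \<longleftrightarrow> U \<subseteq> q ` topspace X \<and> openin X {x \<in> topspace X. q x \<in> U}"
  unfolding quotient_topology_def by (simp add: topology_inverse'[OF istopology_quotient])

lemma topspace_quot: "topspace (quotient_topology X q) = q ` topspace X"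
proof
  show "topspace (quotient_topology X q) \<subseteq> q ` topspace X"
    using openin_topspace[of "quotient_topology X q"] unfolding openin_quot by blast
  have "{x \<in> topspace X. q x \<in> q ` topspace X} = topspace X" by auto
  then have "openin (quotient_topology X q) (q ` topspace X)" by (simp add: openin_quot)
  then show "q ` topspace X \<subseteq> topspace (quotient_topology X q)" by (rule openin_subset)
qed

lemma cont_quot: "continuous_map X (quotient_topology X q) q"
  unfolding continuous_map_def by (auto simp: topspace_quot openin_quot)

lemma cont_from_quot:
  assumes "continuous_map X Y (\<lambda>x. f (q x))"
  shows "continuous_map (quotient_topology X q) Y f"
  unfolding continuous_map_def
proof (intro conjI allI impI)
  show "f \<in> topspace (quotient_topology X q) \<rightarrow> topspace Y"
    using assms by (auto simp: topspace_quot continuous_map_def)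
  fix V assume V: "openin Y V"
  have e: "{x \<in> topspace X. q x \<in> {y \<in> q ` topspace X. f y \<in> V}} = {x \<in> topspace X. f (q x) \<in> V}" by auto
  show "openin (quotient_topology X q) {x \<in> topspace (quotient_topology X q). f x \<in> V}"
    unfolding openin_quot topspace_quot e using assms V by (auto simp: continuous_map_def)
qed

lemma cont_mm: "continuous_on S f \<Longrightarrow> continuous_on S g \<Longrightarrow> continuous_on S (\<lambda>x. (f x :: cmat) ** g x)"
  unfolding matrix_matrix_mult_def by (intro continuous_intros)

lemma cont_trace: "continuous_on S f \<Longrightarrow> continuous_on S (\<lambda>x. trace (f x :: cmat))"
  unfolding trace_def by (intro continuous_intros)

lemma cont_adj: "continuous_on S f \<Longrightarrow> continuous_on S (\<lambda>x. mat_adjoint (f x))"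
  unfolding mat_adjoint_def by (intro continuous_intros)

lemma cont_mk: "continuous_on S f \<Longrightarrow> continuous_on S g \<Longrightarrow> continuous_on S (\<lambda>x. mk (f x) (g x))"
  unfolding mk_def
  apply (intro continuous_on_vec_lambda)
  subgoal for i j by (cases "i = 1"; cases "j = 1") (auto intro: continuous_intros)
  done

lemma cont_Kx: "continuous_on S Kx"
  unfolding Kx_def Complex_eq by (intro cont_mk continuous_intros)

lemma T_alt: "T = (\<lambda>z. (Re (trace (fst z ** snd (snd (snd z)))), Re (trace (fst (snd z) ** fst (snd (snd z)))),
   Re (trace (fst z ** fst (snd (snd z)))), Re (trace (fst z ** snd (snd (snd z)) ** fst (snd (snd z)))),
   Re (trace (fst (snd z) ** snd (snd (snd z)) ** fst (snd (snd z))))))"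
  by (rule ext) (auto simp: T_def split: prod.split)

lemma cont_T: "continuous_on S T"
  unfolding T_alt by (intro continuous_intros cont_trace cont_mm)

lemma cont_Q: "continuous_on (sphere 0 1) Q"
proof -
  have "continuous_on (sphere 0 1) (\<lambda>x. ((I0, J0, Kx x ** J0 ** mat_adjoint (Kx x), Kx x ** I0 ** mat_adjoint (Kx x)) :: quad))"
    by (intro continuous_intros cont_mm cont_adj cont_Kx)
  then show ?thesis
    by (rule continuous_on_cong[THEN iffD1, rotated 2]) (auto simp: Q_def SU2_inv Kx_SU2)
qed



lemma topspace_M: "topspace M_top = orbit ` RepVar"
  by (simp add: M_top_def topspace_quot)

lemma P_M: "x \<in> sphere 0 1 \<Longrightarrow> P x \<in> topspace M_top"
  by (simp add: topspace_M P_def Q_RepVar)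

lemma S_sub_M: "S_sub \<subseteq> topspace M_top"
  unfolding S_sub_eq using P_M by (simp add: image_subset_iff)

lemma topspace_sub: "topspace (subtopology M_top S_sub) = S_sub"
  using S_sub_M by (simp add: Int_absorb1)

lemma cont_P: "continuous_map (top_of_set (sphere 0 1)) (subtopology M_top S_sub) P"
proof -
  have "continuous_map (top_of_set (sphere 0 1)) (top_of_set RepVar) Q"
    using cont_Q Q_RepVar by auto
  then have "continuous_map (top_of_set (sphere 0 1)) M_top (orbit \<circ> Q)"
    unfolding M_top_def by (rule continuous_map_compose[OF _ cont_quot])
  then have "continuous_map (top_of_set (sphere 0 1)) M_top P"
    by (simp add: P_def[abs_def] comp_def)
  then show ?thesis
    by (rule continuous_map_into_subtopology) (use S_sub_eq in auto)
qed

definition Tbar :: "quad set \<Rightarrow> real \<times> real \<times> real \<times> real \<times> real" where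
  "Tbar Ob = T (SOME z. z \<in> RepVar \<and> orbit z = Ob)"

lemma Tbar_orbit: assumes z: "z \<in> RepVar" shows "Tbar (orbit z) = T z"
proof -
  define z' where "z' = (SOME z'. z' \<in> RepVar \<and> orbit z' = orbit z)"
  have "z' \<in> RepVar \<and> orbit z' = orbit z" unfolding z'_def by (rule someI[of _ z]) (use z in simp)
  then have "z' \<in> orbit z" using orbit_self by metis
  then obtain u where "u \<in> SU2" "z' = conj_act u z" using orbit_mem by blast
  then have "T z' = T z" by (simp add: T_inv)
  then show ?thesis by (simp add: Tbar_def z'_def)
qed

lemma cont_Tbar: "continuous_map M_top euclidean Tbar"
  unfolding M_top_def
proof (rule cont_from_quot)
  have "continuous_map (top_of_set RepVar) euclidean T" using cont_T by simp
  then show "continuous_map (top_of_set RepVar) euclidean (\<lambda>x. Tbar (orbit x))"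
    by (rule continuous_map_eq) (simp add: Tbar_orbit)
qed

lemma Tbar_P: "x \<in> sphere 0 1 \<Longrightarrow> Tbar (P x) = T (Q x)"
  by (simp add: P_def Tbar_orbit Q_RepVar)

lemma P_neg: "x \<in> sphere 0 1 \<Longrightarrow> P (- x) = P x"
  by (simp add: P_def Q_neg)

lemma P_eq: assumes "x \<in> sphere 0 1" "y \<in> sphere 0 1" "P x = P y" shows "y = x \<or> y = - x"
  using T_inj[OF assms(1,2)] Tbar_P assms by metis

lemma inj_Tbar: "inj_on Tbar (P ` sphere 0 1)"
proof (rule inj_onI)
  fix A B assume "A \<in> P ` sphere 0 1" "B \<in> P ` sphere 0 1" "Tbar A = Tbar B"
  then obtain x y where xy: "x \<in> sphere 0 1" "y \<in> sphere 0 1" "A = P x" "B = P y" "T (Q x) = T (Q y)"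
    using Tbar_P by auto
  then have "y = x \<or> y = - x" using T_inj by blast
  then show "A = B" using xy P_neg by auto
qed

lemma Hausdorff_sub: "Hausdorff_space (subtopology M_top S_sub)"
proof (rule Hausdorff_space_injective_preimage)
  show "Hausdorff_space (euclidean :: (real \<times> real \<times> real \<times> real \<times> real) topology)" by simp
  show "continuous_map (subtopology M_top S_sub) euclidean Tbar"
    by (rule continuous_map_from_subtopology[OF cont_Tbar])
  show "inj_on Tbar (topspace (subtopology M_top S_sub))"
    unfolding topspace_sub unfolding S_sub_eq by (rule inj_Tbar)
qed

definition Fm :: "(real^3) set \<Rightarrow> quad set" where "Fm C = P (SOME x. x \<in> C)"

lemma Fm_q: assumes x: "x \<in> sphere 0 1" shows "Fm {x, - x} = P x"
proof -
  define y where "y = (SOME y. y \<in> {x, - x})"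
  have "y \<in> {x, - x}" unfolding y_def by (rule someI[of _ x]) simp
  then have "y = x \<or> y = - x" by simp
  then have "P y = P x" using P_neg[OF x] by metis
  then show ?thesis by (simp add: Fm_def y_def)
qed

lemma topspace_RP2: "topspace RP2 = (\<lambda>x. {x, - x}) ` sphere 0 1"
  by (simp add: RP2_def topspace_quot)

theorem mainTheorem13:
  shows "subtopology M_top S_sub homeomorphic_space RP2"
proof -
  have cont: "continuous_map RP2 (subtopology M_top S_sub) Fm"
    unfolding RP2_def
  proof (rule cont_from_quot)
    show "continuous_map (top_of_set (sphere 0 1)) (subtopology M_top S_sub) (\<lambda>x. Fm {x, - x})"
      by (rule continuous_map_eq[OF cont_P]) (simp add: Fm_q)
  qed
  have comp: "compact_space RP2"
  proof -
    have "compactin (top_of_set (sphere 0 1)) (sphere (0::real^3) 1)"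
      by (simp add: compactin_subtopology compact_sphere)
    then have "compactin RP2 ((\<lambda>x. {x, - x}) ` sphere 0 1)"
      unfolding RP2_def by (rule image_compactin[OF _ cont_quot])
    then show ?thesis by (simp add: compact_space_def topspace_RP2)
  qed
  have surj: "Fm ` topspace RP2 = topspace (subtopology M_top S_sub)"
    unfolding topspace_RP2 topspace_sub unfolding S_sub_eq image_image by (auto simp: Fm_q)
  have inj: "inj_on Fm (topspace RP2)"
    unfolding topspace_RP2
  proof (rule inj_onI)
    fix A B assume "A \<in> (\<lambda>x. {x, - x}) ` sphere 0 1" "B \<in> (\<lambda>x. {x, - x}) ` sphere 0 1" "Fm A = Fm B"
    then obtain x y where xy: "x \<in> sphere 0 1" "y \<in> sphere 0 1" "A = {x, - x}" "B = {y, - y}" "P x = P y"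
      using Fm_q by auto
    then have "y = x \<or> y = - x" using P_eq by blast
    then show "A = B" using xy by auto
  qed
  have "homeomorphic_map RP2 (subtopology M_top S_sub) Fm"
    by (rule continuous_imp_homeomorphic_map[OF cont comp Hausdorff_sub surj inj])
  then have "RP2 homeomorphic_space subtopology M_top S_sub"
    using homeomorphic_space by blast
  then show ?thesis using homeomorphic_space_sym by blast
qed

end
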